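(* Let $G=(V,E)$ be a connected graph and $\ell$ an $s$-cyclic labeling of $G$ (for some integer $s\ge 3$). Then either $G$ is acyclic or $G$ contains a unique cycle, whose length $k$ is divisible by $s$. Further, if $G$ contains a cycle $C$, then $C$ is an oriented (directed) cycle in the orientation induced by $\ell$, and all oriented paths in $G$ are oriented away from the vertices of $C$.
   Context: For $L=\{0,1,\dots,s-1\}$ with $s\ge 3$, a function $\ell:V\to L$ is an $s$-cyclic labeling of $G$ if every $v\in V$ has at most one neighbor $P(v)$ (the parent of $v$) with $\ell(P(v))\equiv \ell(v)-1 \pmod s$, and all other neighbors $w$ of $v$ satisfy $\ell(w)\equiv\ell(v)+1\pmod s$. The orientation induced by $\ell$ orients each edge $\{u,v\}$ as $(u,v)$ when $u=P(v)$, i.e. away from the parent. *)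

theory Defs
  imports Main
begin

definition simple_graph :: "'a set \<Rightarrow> 'a set set \<Rightarrow> bool" where
  "simple_graph V E \<longleftrightarrow> (\<forall>e\<in>E. \<exists>u v. e = {u, v} \<and> u \<in> V \<and> v \<in> V \<and> u \<noteq> v)"

definition adj :: "'a set set \<Rightarrow> 'a \<Rightarrow> 'a \<Rightarrow> bool" where
  "adj E u v \<longleftrightarrow> {u, v} \<in> E"

definition connected_graph :: "'a set \<Rightarrow> 'a set set \<Rightarrow> bool" where
  "connected_graph V E \<longleftrightarrow> (\<forall>u\<in>V. \<forall>v\<in>V. (adj E)\<^sup>*\<^sup>* u v)"

definition is_cycle :: "'a set \<Rightarrow> 'a set set \<Rightarrow> 'a list \<Rightarrow> bool" where
  "is_cycle V E xs \<longleftrightarrow> length xs \<ge> 3 \<and> distinct xs \<and> set xs \<subseteq> V \<and>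
     (\<forall>i < length xs. adj E (xs ! i) (xs ! ((i + 1) mod length xs)))"

text \<open>The edge set of a cycle (identifies a cycle as a subgraph, independent of
  starting point and direction of traversal).\<close>
definition cycle_edges :: "'a list \<Rightarrow> 'a set set" where
  "cycle_edges xs = {{xs ! i, xs ! ((i + 1) mod length xs)} | i. i < length xs}"

definition acyclic_graph :: "'a set \<Rightarrow> 'a set set \<Rightarrow> bool" where
  "acyclic_graph V E \<longleftrightarrow> \<not> (\<exists>xs. is_cycle V E xs)"

definition parent_label :: "nat \<Rightarrow> ('a \<Rightarrow> nat) \<Rightarrow> 'a \<Rightarrow> 'a \<Rightarrow> bool" where
  "parent_label s l u v \<longleftrightarrow> (int (l u)) mod (int s) = (int (l v) - 1) mod (int s)"

definition cyclic_labeling :: "nat \<Rightarrow> 'a set \<Rightarrow> 'a set set \<Rightarrow> ('a \<Rightarrow> nat) \<Rightarrow> bool" where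
  "cyclic_labeling s V E l \<longleftrightarrow>
     (\<forall>v\<in>V. l v < s) \<and>
     (\<forall>v\<in>V. \<forall>u u'. adj E u v \<and> parent_label s l u v \<and> adj E u' v \<and> parent_label s l u' v
                  \<longrightarrow> u = u') \<and>
     (\<forall>v\<in>V. \<forall>w. adj E v w \<and> \<not> parent_label s l w v \<longrightarrow> (int (l w)) mod (int s) = (int (l v) + 1) mod (int s))"

text \<open>Induced orientation: the edge {u,v} is oriented (u,v) iff u = P(v).\<close>
definition arc :: "nat \<Rightarrow> 'a set set \<Rightarrow> ('a \<Rightarrow> nat) \<Rightarrow> 'a \<Rightarrow> 'a \<Rightarrow> bool" where
  "arc s E l u v \<longleftrightarrow> adj E u v \<and> parent_label s l u v"

definition oriented_cycle :: "nat \<Rightarrow> 'a set set \<Rightarrow> ('a \<Rightarrow> nat) \<Rightarrow> 'a list \<Rightarrow> bool" where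
  "oriented_cycle s E l xs \<longleftrightarrow>
     (\<forall>i < length xs. arc s E l (xs ! i) (xs ! ((i + 1) mod length xs))) \<or>
     (\<forall>i < length xs. arc s E l (xs ! ((i + 1) mod length xs)) (xs ! i))"

definition is_path :: "'a set \<Rightarrow> 'a set set \<Rightarrow> 'a list \<Rightarrow> bool" where
  "is_path V E ps \<longleftrightarrow> ps \<noteq> [] \<and> distinct ps \<and> set ps \<subseteq> V \<and>
     (\<forall>i. i + 1 < length ps \<longrightarrow> adj E (ps ! i) (ps ! (i + 1)))"

end

theory Submission
  imports Defs
begin

lemma adj_sym: "adj E u v = adj E v u"
  by (simp add: adj_def insert_commute)

lemma adj_V: "simple_graph V E \<Longrightarrow> adj E u v \<Longrightarrow> u \<in> V \<and> v \<in> V \<and> u \<noteq> v"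
  unfolding simple_graph_def adj_def by (metis doubleton_eq_iff)

lemma cyc_prop:
  fixes k :: nat
  assumes "\<forall>i<k. P i \<longrightarrow> P ((i+1) mod k)" "P j" "j < k" "i < k"
  shows "P i"
proof -
  have k: "k > 0" using assms by auto
  have "\<forall>m. P ((j+m) mod k)"
  proof
    fix m show "P ((j+m) mod k)"
    proof (induction m)
      case 0 then show ?case using assms by simp
    next
      case (Suc m)
      have "(j + Suc m) mod k = ((j+m) mod k + 1) mod k" by (simp add: mod_simps)
      moreover have "(j+m) mod k < k" using k by simp
      ultimately show ?case using assms(1) Suc by metis
    qed
  qed
  then have "P ((j + (k - j + i)) mod k)" by blast
  moreover have "(j + (k - j + i)) mod k = i" using assms by simp
  ultimately show ?thesis by simp
qed

context
  fixes V :: "'a set" and E :: "'a set set" and s :: nat and l :: "'a \<Rightarrow> nat"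
  assumes sg: "simple_graph V E"
    and cl: "cyclic_labeling s V E l"
begin

lemma F1: assumes "adj E u v" shows "arc s E l u v \<or> arc s E l v u"
proof (cases "parent_label s l u v")
  case True then show ?thesis using assms by (simp add: arc_def)
next
  case False
  have v: "v \<in> V" using adj_V[OF sg assms] by simp
  have "adj E v u" using assms adj_sym by metis
  then have h: "int (l u) mod int s = (int (l v) + 1) mod int s"
    using cl False v unfolding cyclic_labeling_def by blast
  have "(int (l u) - 1) mod int s = (int (l u) mod int s - 1) mod int s" by (simp add: mod_diff_left_eq)
  also have "\<dots> = ((int (l v) + 1) mod int s - 1) mod int s" using h by simp
  also have "\<dots> = int (l v) mod int s" by (simp add: mod_diff_left_eq)
  finally have "parent_label s l v u" unfolding parent_label_def by simp
  then show ?thesis using \<open>adj E v u\<close> by (simp add: arc_def)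
qed

lemma F2: assumes "arc s E l u v" "arc s E l u' v" shows "u = u'"
proof -
  have v: "v \<in> V" using assms adj_V[OF sg] unfolding arc_def by blast
  have "adj E u v" "adj E u' v" using assms unfolding arc_def by auto
  then show ?thesis using cl v assms unfolding cyclic_labeling_def arc_def by blast
qed

lemma oriented: assumes "is_cycle V E xs" shows "oriented_cycle s E l xs"
proof -
  define k where "k = length xs"
  have k3: "k \<ge> 3" and dist: "distinct xs" and ad: "\<forall>i<k. adj E (xs ! i) (xs ! ((i + 1) mod k))"
    using assms unfolding is_cycle_def k_def by auto
  define f where "f i = arc s E l (xs ! i) (xs ! ((i+1) mod k))" for i
  have step: "\<forall>i<k. f i \<longrightarrow> f ((i+1) mod k)"
  proof (intro allI impI)
    fix i assume i: "i < k" and fi: "f i"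
    let ?b = "(i+1) mod k" let ?c = "((i+1) mod k + 1) mod k"
    have b: "?b < k" using k3 by simp
    have "adj E (xs ! ?b) (xs ! ?c)" using ad b by blast
    then have "arc s E l (xs ! ?b) (xs ! ?c) \<or> arc s E l (xs ! ?c) (xs ! ?b)" by (rule F1)
    moreover
    have "xs ! ?c \<noteq> xs ! i"
    proof
      assume "xs ! ?c = xs ! i"
      moreover have "?c < k" using k3 by simp
      ultimately have eq: "?c = i" using dist i nth_eq_iff_index_eq k_def by metis
      have "?c = (i+2) mod k" by (simp add: mod_simps)
      moreover have "(i+2) mod k \<noteq> i"
      proof (cases "i + 2 < k")
        case True then show ?thesis by simp
      next
        case False
        have "i + 2 - k < k" using i k3 by linarith
        moreover have "(i+2) mod k = (i+2-k) mod k" using False by (simp add: le_mod_geq)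
        ultimately have "(i+2) mod k = i + 2 - k" by simp
        then show ?thesis using k3 False i by linarith
      qed
      ultimately show False using eq by simp
    qed
    ultimately show "f ?b" using fi F2 unfolding f_def by metis
  qed
  show ?thesis
  proof (cases "\<exists>i<k. f i")
    case True
    then obtain j where "j < k" "f j" by blast
    then have "\<forall>i<k. f i" using cyc_prop[OF step] by blast
    then show ?thesis unfolding oriented_cycle_def f_def k_def by simp
  next
    case False
    then have "\<forall>i<k. arc s E l (xs ! ((i + 1) mod k)) (xs ! i)"
      using ad F1 unfolding f_def by blast
    then show ?thesis unfolding oriented_cycle_def k_def by simp
  qed
qed

lemma par_in: assumes "is_cycle V E C" "y \<in> set C" "arc s E l w y" shows "w \<in> set C"
proof -
  define k where "k = length C"
  obtain j where j: "j < k" "y = C ! j" using assms(2) unfolding k_def by (metis in_set_conv_nth)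
  have k: "k \<ge> 3" using assms unfolding is_cycle_def k_def by auto
  have or: "oriented_cycle s E l C" using oriented assms by blast
  show ?thesis
  proof (cases "\<forall>i < k. arc s E l (C ! i) (C ! ((i + 1) mod k))")
    case True
    let ?i = "(j+k-1) mod k"
    have "?i < k" using k by simp
    moreover have "(?i + 1) mod k = j" using k j by (simp add: mod_simps)
    ultimately have "arc s E l (C ! ?i) y" using True j by metis
    then have "w = C ! ?i" using F2 assms(3) by blast
    then show ?thesis using \<open>?i < k\<close> k_def by simp
  next
    case False
    then have "\<forall>i < k. arc s E l (C ! ((i + 1) mod k)) (C ! i)" using or
      unfolding oriented_cycle_def k_def by blast
    then have "arc s E l (C ! ((j + 1) mod k)) y" using j by blast
    then have "w = C ! ((j + 1) mod k)" using F2 assms(3) by blast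
    moreover have "(j + 1) mod k < k" using k by simp
    ultimately show ?thesis using k_def by simp
  qed
qed

lemma Dlem:
  assumes conn: "connected_graph V E" and C: "is_cycle V E C" and v: "v \<in> V"
  shows "\<exists>c\<in>set C. (arc s E l)\<^sup>*\<^sup>* c v"
proof -
  have "C \<noteq> []" using C unfolding is_cycle_def by auto
  then have x: "hd C \<in> set C" by simp
  then have "hd C \<in> V" using C unfolding is_cycle_def by auto
  then have "(adj E)\<^sup>*\<^sup>* (hd C) v" using conn v unfolding connected_graph_def by blast
  then show ?thesis
  proof (induction rule: rtranclp_induct)
    case base then show ?case using x by blast
  next
    case (step u v)
    then obtain c where c: "c \<in> set C" "(arc s E l)\<^sup>*\<^sup>* c u" by blast
    from F1[OF step(2)] show ?case
    proof
      assume "arc s E l u v" then show ?thesis using c by (meson rtranclp.rtrancl_into_rtrancl)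
    next
      assume a: "arc s E l v u"
      show ?thesis
      proof (cases "u \<in> set C")
        case True then show ?thesis using par_in[OF C True a] by blast
      next
        case False
        then have "c \<noteq> u" using c by blast
        then obtain w where "(arc s E l)\<^sup>*\<^sup>* c w" "arc s E l w u" using c(2)
          by (metis rtranclp.cases)
        then show ?thesis using F2 a c by blast
      qed
    qed
  qed
qed

lemma intersect:
  assumes C': "is_cycle V E C'" and r: "(arc s E l)\<^sup>*\<^sup>* c y" and c: "c \<in> set C"
  shows "y \<in> set C' \<Longrightarrow> set C \<inter> set C' \<noteq> {}"
  using r
proof (induction rule: rtranclp_induct)
  case base then show ?case using c by blast
next
  case (step w y) then show ?case using par_in[OF C'] by blast
qed

lemma subset:
  assumes C: "is_cycle V E C" and C': "is_cycle V E C'" and z: "z \<in> set C" "z \<in> set C'"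
  shows "set C' \<subseteq> set C"
proof -
  define k where "k = length C'"
  obtain j where j: "j < k" "C' ! j = z" using z unfolding k_def by (metis in_set_conv_nth)
  have or: "oriented_cycle s E l C'" using oriented C' by blast
  have all: "\<forall>i<k. C' ! i \<in> set C"
  proof (cases "\<forall>i < k. arc s E l (C' ! i) (C' ! ((i + 1) mod k))")
    case True
    show ?thesis
    proof (rule ccontr)
      assume "\<not> ?thesis"
      then obtain i0 where i0: "i0 < k" "C' ! i0 \<notin> set C" by blast
      have "\<forall>i<k. C' ! i \<notin> set C \<longrightarrow> C' ! ((i+1) mod k) \<notin> set C"
        using True par_in[OF C] by blast
      then have "C' ! j \<notin> set C" using cyc_prop[where P="\<lambda>i. C' ! i \<notin> set C"] i0 j by blast
      then show False using j z by simp
    qed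
  next
    case False
    then have "\<forall>i < k. arc s E l (C' ! ((i + 1) mod k)) (C' ! i)" using or
      unfolding oriented_cycle_def k_def by blast
    then have "\<forall>i<k. C' ! i \<in> set C \<longrightarrow> C' ! ((i+1) mod k) \<in> set C"
      using par_in[OF C] by blast
    then show ?thesis using cyc_prop[where P="\<lambda>i. C' ! i \<in> set C"] j z by blast
  qed
  then show ?thesis unfolding k_def by (metis in_set_conv_nth subsetI)
qed

lemma edges_char:
  assumes C: "is_cycle V E C"
  shows "cycle_edges C = {{p, y} | p y. y \<in> set C \<and> arc s E l p y}"
proof -
  define k where "k = length C"
  have k: "k \<ge> 3" using C unfolding is_cycle_def k_def by auto
  have or: "oriented_cycle s E l C" using oriented C by blast
  show ?thesis
  proof (cases "\<forall>i < k. arc s E l (C ! i) (C ! ((i + 1) mod k))")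
    case True
    show ?thesis
    proof (intro equalityI subsetI)
      fix e assume "e \<in> cycle_edges C"
      then obtain i where i: "i < k" "e = {C ! i, C ! ((i+1) mod k)}"
        unfolding cycle_edges_def k_def by blast
      have "(i+1) mod k < k" using k by simp
      then have "C ! ((i+1) mod k) \<in> set C" using k_def by simp
      then show "e \<in> {{p, y} | p y. y \<in> set C \<and> arc s E l p y}" using True i by blast
    next
      fix e assume "e \<in> {{p, y} | p y. y \<in> set C \<and> arc s E l p y}"
      then obtain p y where py: "e = {p, y}" "y \<in> set C" "arc s E l p y" by blast
      obtain j where j: "j < k" "y = C ! j" using py unfolding k_def by (metis in_set_conv_nth)
      let ?i = "(j+k-1) mod k"
      have "?i < k" using k by simp
      moreover have "(?i + 1) mod k = j" using k j by (simp add: mod_simps)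
      ultimately have "arc s E l (C ! ?i) y" using True j by metis
      then have "p = C ! ?i" using F2 py by blast
      then have "e = {C ! ?i, C ! ((?i+1) mod k)}" using py j \<open>(?i + 1) mod k = j\<close> by simp
      then show "e \<in> cycle_edges C" unfolding cycle_edges_def k_def using \<open>?i < k\<close> k_def by blast
    qed
  next
    case False
    then have B: "\<forall>i < k. arc s E l (C ! ((i + 1) mod k)) (C ! i)" using or
      unfolding oriented_cycle_def k_def by blast
    show ?thesis
    proof (intro equalityI subsetI)
      fix e assume "e \<in> cycle_edges C"
      then obtain i where i: "i < k" "e = {C ! i, C ! ((i+1) mod k)}"
        unfolding cycle_edges_def k_def by blast
      have "C ! i \<in> set C" using i k_def by simp
      moreover have "e = {C ! ((i+1) mod k), C ! i}" using i by (simp add: insert_commute)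
      ultimately show "e \<in> {{p, y} | p y. y \<in> set C \<and> arc s E l p y}" using B i by blast
    next
      fix e assume "e \<in> {{p, y} | p y. y \<in> set C \<and> arc s E l p y}"
      then obtain p y where py: "e = {p, y}" "y \<in> set C" "arc s E l p y" by blast
      obtain j where j: "j < k" "y = C ! j" using py unfolding k_def by (metis in_set_conv_nth)
      have "p = C ! ((j + 1) mod k)" using B j F2 py by blast
      then have "e = {C ! j, C ! ((j+1) mod k)}" using py j by (simp add: insert_commute)
      then show "e \<in> cycle_edges C" unfolding cycle_edges_def k_def using j k_def by blast
    qed
  qed
qed

lemma path_lemma:
  assumes C: "is_cycle V E C" and ps: "is_path V E ps" and h: "hd ps \<in> set C"
    and t: "\<forall>x\<in>set (tl ps). x \<notin> set C"
  shows "i + 1 < length ps \<Longrightarrow> arc s E l (ps ! i) (ps ! (i + 1))"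
proof (induction i)
  case 0
  have ad: "adj E (ps ! 0) (ps ! 1)" using ps 0 unfolding is_path_def by auto
  have "ps \<noteq> []" using ps unfolding is_path_def by auto
  then have h0: "ps ! 0 \<in> set C" using h by (simp add: hd_conv_nth)
  have "ps ! 1 = tl ps ! 0" using 0 by (simp add: nth_tl)
  then have "ps ! 1 \<in> set (tl ps)" using 0 by simp
  then have "ps ! 1 \<notin> set C" using t by blast
  then show ?case using F1[OF ad] par_in[OF C h0] by auto
next
  case (Suc i)
  have IH: "arc s E l (ps ! i) (ps ! (i+1))" using Suc by simp
  have ad: "adj E (ps ! (i+1)) (ps ! (i+2))" using ps Suc unfolding is_path_def by auto
  have "ps ! (i+2) \<noteq> ps ! i" using ps Suc unfolding is_path_def
    by (simp add: nth_eq_iff_index_eq)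
  then show ?case using F1[OF ad] F2 IH by auto
qed

end

lemma mod_step:
  fixes h :: "nat \<Rightarrow> int" and s d :: int
  assumes k: "k > 0" and st: "\<forall>i<k. h ((i+1) mod k) mod s = (h i + d) mod s"
  shows "(int k * d) mod s = 0"
proof -
  have A: "\<forall>j<k. h j mod s = (h 0 + int j * d) mod s"
  proof
    fix j show "j < k \<longrightarrow> h j mod s = (h 0 + int j * d) mod s"
    proof (induction j)
      case 0 show ?case by simp
    next
      case (Suc j)
      show ?case
      proof
        assume sj: "Suc j < k"
        then have "(j+1) mod k = Suc j" by simp
        then have "h (Suc j) mod s = (h j + d) mod s" using st sj by (metis Suc_lessD)
        also have "\<dots> = (h j mod s + d) mod s" by (simp add: mod_add_left_eq)
        also have "\<dots> = ((h 0 + int j * d) mod s + d) mod s" using Suc sj by simp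
        also have "\<dots> = (h 0 + int (Suc j) * d) mod s" by (simp add: mod_add_left_eq mod_add_right_eq algebra_simps)
        finally show "h (Suc j) mod s = (h 0 + int (Suc j) * d) mod s" .
      qed
    qed
  qed
  have "(k - 1 + 1) mod k = 0" using k by simp
  then have "h 0 mod s = (h (k-1) + d) mod s" using st k by (metis diff_less zero_less_one)
  also have "\<dots> = (h (k-1) mod s + d) mod s" by (simp add: mod_add_left_eq)
  also have "\<dots> = ((h 0 + int (k-1) * d) mod s + d) mod s" using A k by simp
  also have "\<dots> = (h 0 + int (k-1) * d + d) mod s" by (simp add: mod_add_left_eq)
  also have "\<dots> = (h 0 + int k * d) mod s" using k by (simp add: algebra_simps of_nat_diff)
  finally have "(h 0 + int k * d) mod s = h 0 mod s" by simp
  then have "(h 0 + int k * d - h 0) mod s = (h 0 - h 0) mod s" by (metis mod_diff_cong)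
  then show ?thesis by simp
qed

theorem lemma1:
  fixes V :: "'a set" and E :: "'a set set" and s :: nat and l :: "'a \<Rightarrow> nat"
  assumes "simple_graph V E"
    and "connected_graph V E"
    and "s \<ge> 3"
    and "cyclic_labeling s V E l"
  shows "(acyclic_graph V E \<or>
          (\<exists>C. is_cycle V E C \<and> (\<forall>C'. is_cycle V E C' \<longrightarrow> cycle_edges C' = cycle_edges C)
               \<and> s dvd length C))
       \<and> (\<forall>C. is_cycle V E C \<longrightarrow>
            oriented_cycle s E l C \<and>
            (\<forall>ps. is_path V E ps \<and> hd ps \<in> set C \<and> (\<forall>x\<in>set (tl ps). x \<notin> set C) \<longrightarrow>
                  (\<forall>i. i + 1 < length ps \<longrightarrow> arc s E l (ps ! i) (ps ! (i + 1)))))"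
proof (intro conjI allI impI)
  note sg = assms(1) and cl = assms(4)
  fix C ps i
  assume C: "is_cycle V E C"
  show "oriented_cycle s E l C" using oriented[OF sg cl C] .
  assume "is_path V E ps \<and> hd ps \<in> set C \<and> (\<forall>x\<in>set (tl ps). x \<notin> set C)" "i + 1 < length ps"
  then show "arc s E l (ps ! i) (ps ! (i + 1))" using path_lemma[OF sg cl C] by blast
next
  note sg = assms(1) and cl = assms(4)
  show "acyclic_graph V E \<or>
          (\<exists>C. is_cycle V E C \<and> (\<forall>C'. is_cycle V E C' \<longrightarrow> cycle_edges C' = cycle_edges C)
               \<and> s dvd length C)"
  proof (cases "acyclic_graph V E")
    case True then show ?thesis by simp
  next
    case False
    then obtain C where C: "is_cycle V E C" unfolding acyclic_graph_def by blast
    have uniq: "\<forall>C'. is_cycle V E C' \<longrightarrow> cycle_edges C' = cycle_edges C"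
    proof (intro allI impI)
      fix C' assume C': "is_cycle V E C'"
      have "C' \<noteq> []" using C' unfolding is_cycle_def by auto
      then have y: "hd C' \<in> set C'" by simp
      then have "hd C' \<in> V" using C' unfolding is_cycle_def by auto
      then obtain c where "c \<in> set C" "(arc s E l)\<^sup>*\<^sup>* c (hd C')"
        using Dlem[OF sg cl assms(2) C] by blast
      then have "set C \<inter> set C' \<noteq> {}" using intersect[OF sg cl C'] y by blast
      then obtain z where "z \<in> set C" "z \<in> set C'" by blast
      then have "set C = set C'" using subset[OF sg cl C C'] subset[OF sg cl C' C] by blast
      then show "cycle_edges C' = cycle_edges C"
        using edges_char[OF sg cl C] edges_char[OF sg cl C'] by simp
    qed
    define k where "k = length C"
    have k: "k > 0" using C unfolding is_cycle_def k_def by auto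
    have or: "oriented_cycle s E l C" using oriented[OF sg cl C] .
    have "int s dvd int k"
    proof (cases "\<forall>i < k. arc s E l (C ! i) (C ! ((i + 1) mod k))")
      case True
      have "\<forall>i<k. int (l (C ! ((i+1) mod k))) mod int s = (int (l (C ! i)) + 1) mod int s"
      proof (intro allI impI)
        fix i assume "i < k"
        then have p: "int (l (C ! i)) mod int s = (int (l (C ! ((i+1) mod k))) - 1) mod int s"
          using True unfolding arc_def parent_label_def by blast
        have "(int (l (C ! i)) + 1) mod int s = (int (l (C ! i)) mod int s + 1) mod int s"
          by (simp add: mod_add_left_eq)
        also have "\<dots> = ((int (l (C ! ((i+1) mod k))) - 1) mod int s + 1) mod int s" using p by simp
        also have "\<dots> = int (l (C ! ((i+1) mod k))) mod int s" by (simp add: mod_add_left_eq)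
        finally show "int (l (C ! ((i+1) mod k))) mod int s = (int (l (C ! i)) + 1) mod int s" by simp
      qed
      from mod_step[OF k this] show ?thesis by (simp add: dvd_eq_mod_eq_0)
    next
      case False
      then have B: "\<forall>i < k. arc s E l (C ! ((i + 1) mod k)) (C ! i)" using or
        unfolding oriented_cycle_def k_def by blast
      have "\<forall>i<k. int (l (C ! ((i+1) mod k))) mod int s = (int (l (C ! i)) + -1) mod int s"
        using B unfolding arc_def parent_label_def by simp
      from mod_step[OF k this] have "(- int k) mod int s = 0" by simp
      then show ?thesis by (simp add: dvd_eq_mod_eq_0[symmetric])
    qed
    then have "s dvd length C" unfolding k_def by simp
    then show ?thesis using C uniq by blast
  qed
qed

end
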